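(* Let $(X,d)$ be a compact metric space and let $f:X\to X$ be an arbitrary map (no continuity assumed). If $(x_k)_{k\in\mathbb{N}}$ is a sequence in $CR_f$ such that $x_k\,\mathcal{C}\,x_{k+1}$ for every $k$, then there exists $y\in CR_f$ such that $x_k\,\mathcal{C}\,y$ for every $k\in\mathbb{N}$.
   Context: For a metric space $(X,d)$ and map $f:X\to X$: an $\varepsilon$-chain from $x$ to $y$ is a finite sequence $x_0=x,\dots,x_n=y$, $n\ge1$, with $d(f(x_i),x_{i+1})<\varepsilon$ for all $i$; $x\,\mathcal{C}\,y$ iff for every $\varepsilon>0$ there is an $\varepsilon$-chain from $x$ to $y$; $CR_f=\{x\in X:x\,\mathcal{C}\,x\}$. *)

theory Defs
  imports "HOL-Analysis.Analysis"
begin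

definition eps_chain :: "'a::metric_space set \<Rightarrow> ('a \<Rightarrow> 'a) \<Rightarrow> real \<Rightarrow> 'a \<Rightarrow> 'a \<Rightarrow> bool" where
  "eps_chain X f e x y \<longleftrightarrow>
     (\<exists>n::nat. \<exists>c::nat \<Rightarrow> 'a. n \<ge> 1 \<and> c 0 = x \<and> c n = y \<and>
        (\<forall>i\<le>n. c i \<in> X) \<and> (\<forall>i<n. dist (f (c i)) (c (Suc i)) < e))"

definition chain_rel :: "'a::metric_space set \<Rightarrow> ('a \<Rightarrow> 'a) \<Rightarrow> 'a \<Rightarrow> 'a \<Rightarrow> bool" where
  "chain_rel X f x y \<longleftrightarrow> (\<forall>e>0. eps_chain X f e x y)"

definition chain_recurrent_set :: "'a::metric_space set \<Rightarrow> ('a \<Rightarrow> 'a) \<Rightarrow> 'a set" where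
  "chain_recurrent_set X f = {x \<in> X. chain_rel X f x x}"

end

theory Submission
  imports Defs
begin

lemma eps_chain_trans:
  assumes "eps_chain X f e a b" "eps_chain X f e b d"
  shows "eps_chain X f e a d"
proof -
  obtain n c1 where n: "n \<ge> 1" "c1 0 = a" "c1 n = b" "\<forall>i\<le>n. c1 i \<in> X"
    "\<forall>i<n. dist (f (c1 i)) (c1 (Suc i)) < e"
    using assms(1) unfolding eps_chain_def by blast
  obtain m c2 where m: "m \<ge> 1" "c2 0 = b" "c2 m = d" "\<forall>i\<le>m. c2 i \<in> X"
    "\<forall>i<m. dist (f (c2 i)) (c2 (Suc i)) < e"
    using assms(2) unfolding eps_chain_def by blast
  define c where "c = (\<lambda>i. if i \<le> n then c1 i else c2 (i - n))"
  have h1: "c 0 = a" using n by (simp add: c_def)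
  have h2: "c (n + m) = d" using m by (simp add: c_def)
  have h3: "\<forall>i\<le>n+m. c i \<in> X" using n m by (auto simp: c_def)
  have h4: "\<forall>i<n+m. dist (f (c i)) (c (Suc i)) < e"
  proof (intro allI impI)
    fix i assume i: "i < n + m"
    show "dist (f (c i)) (c (Suc i)) < e"
    proof (cases "i < n")
      case True then show ?thesis using n by (simp add: c_def)
    next
      case False
      then have ci: "c i = c2 (i - n)" using n m by (cases "i = n") (auto simp: c_def)
      have "c (Suc i) = c2 (Suc (i - n))" using False by (simp add: c_def Suc_diff_le)
      then show ?thesis using ci m(5) i False by simp
    qed
  qed
  have h5: "1 \<le> n + m" using n by simp
  show ?thesis unfolding eps_chain_def
    apply (rule exI[of _ "n+m"])
    apply (rule exI[of _ c])
    using h1 h2 h3 h4 h5 by blast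
qed

lemma chain_rel_trans:
  "chain_rel X f a b \<Longrightarrow> chain_rel X f b d \<Longrightarrow> chain_rel X f a d"
  unfolding chain_rel_def using eps_chain_trans by blast

lemma chain_rel_X:
  assumes "chain_rel X f a b" shows "a \<in> X" "b \<in> X"
proof -
  have h: "eps_chain X f 1 a b" using assms unfolding chain_rel_def by simp
  show "a \<in> X" using h unfolding eps_chain_def by (elim exE conjE) (metis le0)
  show "b \<in> X" using h unfolding eps_chain_def by (elim exE conjE) (metis order_refl)
qed

lemma chain_rel_f:
  assumes "a \<in> X" "f ` X \<subseteq> X" shows "chain_rel X f a (f a)"
  unfolding chain_rel_def
proof (intro allI impI)
  fix e :: real assume e: "e > 0"
  define c where "c = (\<lambda>i::nat. if i = 0 then a else f a)"
  have h1: "c 0 = a" "c 1 = f a" by (simp_all add: c_def)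
  have h2: "\<forall>i\<le>1. c i \<in> X" using assms by (auto simp: c_def)
  have h3: "\<forall>i<1. dist (f (c i)) (c (Suc i)) < e" using e by (simp add: c_def)
  show "eps_chain X f e a (f a)" unfolding eps_chain_def
    apply (rule exI[of _ 1])
    apply (rule exI[of _ c])
    using h1 h2 h3 by simp
qed

lemma chain_rel_closed:
  assumes "closed X" shows "closed {w. chain_rel X f z w}"
proof -
  have "closure {w. chain_rel X f z w} \<subseteq> {w. chain_rel X f z w}"
  proof
    fix w assume "w \<in> closure {w. chain_rel X f z w}"
    then have ap: "\<forall>e>0. \<exists>y. chain_rel X f z y \<and> dist y w < e"
      by (auto simp: closure_approachable)
    have wX: "w \<in> X"
    proof -
      have "\<forall>e>0. \<exists>y\<in>X. dist y w < e" using ap chain_rel_X by blast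
      then show ?thesis using assms closed_approachable by blast
    qed
    have "chain_rel X f z w" unfolding chain_rel_def
    proof (intro allI impI)
      fix e :: real assume e: "e > 0"
      obtain y where y: "chain_rel X f z y" "dist y w < e/2" using ap e by (meson half_gt_zero)
      then have "eps_chain X f (e/2) z y" using e unfolding chain_rel_def by simp
      then obtain n c where n: "n \<ge> 1" "c 0 = z" "c n = y" "\<forall>i\<le>n. c i \<in> X"
        "\<forall>i<n. dist (f (c i)) (c (Suc i)) < e/2"
        unfolding eps_chain_def by blast
      define c' where "c' = c(n := w)"
      have "c' 0 = z" using n by (simp add: c'_def)
      moreover have "c' n = w" by (simp add: c'_def)
      moreover have "\<forall>i\<le>n. c' i \<in> X" using n wX by (simp add: c'_def)
      moreover have "\<forall>i<n. dist (f (c' i)) (c' (Suc i)) < e"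
      proof (intro allI impI)
        fix i assume i: "i < n"
        show "dist (f (c' i)) (c' (Suc i)) < e"
        proof (cases "Suc i = n")
          case True
          have "dist (f (c i)) w \<le> dist (f (c i)) y + dist y w" by (rule dist_triangle)
          also have "\<dots> < e" using n(3,5) i True y(2) by fastforce
          finally show ?thesis using True i by (simp add: c'_def)
        next
          case False
          have "dist (f (c i)) (c (Suc i)) < e/2" using n(5) i by blast
          then show ?thesis using False e i by (simp add: c'_def)
        qed
      qed
      ultimately show "eps_chain X f e z w" unfolding eps_chain_def using n(1) by blast
    qed
    then show "w \<in> {w. chain_rel X f z w}" by simp
  qed
  then show ?thesis by (simp add: closure_subset_eq)
qed


lemma chain_rel_seq:
  assumes "\<And>k. chain_rel X f (x k) (x (Suc k))"
  shows "k < j \<Longrightarrow> chain_rel X f (x k) (x j)"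
proof (induction j)
  case 0 then show ?case by simp
next
  case (Suc j)
  show ?case
  proof (cases "k = j")
    case True then show ?thesis using assms by simp
  next
    case False
    then have "chain_rel X f (x k) (x j)" using Suc by simp
    then show ?thesis using assms[of j] by (rule chain_rel_trans)
  qed
qed

theorem lemma3p5:
  fixes X :: "'a::metric_space set" and f :: "'a \<Rightarrow> 'a" and x :: "nat \<Rightarrow> 'a"
  assumes "compact X"
    and "f ` X \<subseteq> X"
    and "\<And>k. x k \<in> chain_recurrent_set X f"
    and "\<And>k. chain_rel X f (x k) (x (Suc k))"
  shows "\<exists>y \<in> chain_recurrent_set X f. \<forall>k. chain_rel X f (x k) y"
proof -
  define R where "R z = {w. chain_rel X f z w}" for z
  have Rm: "w \<in> R z \<longleftrightarrow> chain_rel X f z w" for w z by (simp add: R_def)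
  have clX: "closed X" using assms(1) by (rule compact_imp_closed)
  have Rcl: "closed (R z)" for z unfolding R_def using clX by (rule chain_rel_closed)
  have RX: "R z \<subseteq> X" for z using chain_rel_X(2) Rm by blast
  have Rtr: "R w \<subseteq> R z" if "w \<in> R z" for w z
  proof
    fix v assume "v \<in> R w"
    then show "v \<in> R z" using that Rm chain_rel_trans by metis
  qed
  have Rf: "f z \<in> R z" if "z \<in> X" for z using Rm chain_rel_f[OF that assms(2)] by blast
  have xX: "x k \<in> X" for k using assms(3) unfolding chain_recurrent_set_def by blast
  define S0 where "S0 = {z \<in> X. \<forall>k. z \<in> R (x k)}"
  have S0m: "z \<in> S0 \<longleftrightarrow> z \<in> X \<and> (\<forall>k. z \<in> R (x k))" for z by (simp add: S0_def)
  have S0tr: "w \<in> S0" if "z \<in> S0" "w \<in> R z" for z w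
    using that S0m Rtr RX by blast
  have S0ne: "S0 \<noteq> {}"
  proof -
    have "X \<inter> \<Inter>(range (\<lambda>k. R (x k))) \<noteq> {}"
    proof (rule compact_imp_fip[OF assms(1)])
      show "closed t" if "t \<in> range (\<lambda>k. R (x k))" for t using Rcl that by blast
      show "X \<inter> \<Inter> f' \<noteq> {}" if h: "finite f'" "f' \<subseteq> range (\<lambda>k. R (x k))" for f'
      proof -
        from h obtain K where K: "finite K" "f' = (\<lambda>k. R (x k)) ` K"
          by (meson finite_subset_image)
        define m where "m = Max (insert 0 K)"
        have km: "k \<le> m" if "k \<in> K" for k using K(1) that unfolding m_def by simp
        have "x (Suc m) \<in> R (x k)" if "k \<in> K" for k
        proof -
          have "k < Suc m" using km[OF that] by simp
          then show ?thesis using chain_rel_seq[of X f x, OF assms(4)] Rm by blast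
        qed
        then have "x (Suc m) \<in> \<Inter> f'" using K(2) by blast
        then show "X \<inter> \<Inter> f' \<noteq> {}" using xX by blast
      qed
    qed
    then obtain w where "w \<in> X" "w \<in> \<Inter>(range (\<lambda>k. R (x k)))" by blast
    then have "w \<in> S0" using S0m by blast
    then show ?thesis by blast
  qed
  define A where "A = (\<lambda>z. - R z) ` S0"
  have "\<exists>M\<in>A. \<forall>Y\<in>A. M \<subseteq> Y \<longrightarrow> Y = M"
  proof (rule subset_Zorn)
    fix C assume ch: "subset.chain A C"
    show "\<exists>U\<in>A. \<forall>Y\<in>C. Y \<subseteq> U"
    proof (cases "C = {}")
      case True then show ?thesis using S0ne unfolding A_def by blast
    next
      case False
      have CA: "C \<subseteq> A" using ch by (simp add: subset_chain_def)
      have "X \<inter> \<Inter>(uminus ` C) \<noteq> {}"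
      proof (rule compact_imp_fip[OF assms(1)])
        show "closed t" if ht: "t \<in> uminus ` C" for t
        proof -
          obtain Y where "Y \<in> C" "t = - Y" using ht by blast
          then obtain z where "t = R z" using CA unfolding A_def by auto
          then show ?thesis using Rcl by simp
        qed
        show "X \<inter> \<Inter> f' \<noteq> {}" if h: "finite f'" "f' \<subseteq> uminus ` C" for f'
        proof -
          from h obtain C' where C': "finite C'" "C' \<subseteq> C" "f' = uminus ` C'"
            by (meson finite_subset_image)
          show "X \<inter> \<Inter> f' \<noteq> {}"
          proof (cases "C' = {}")
            case True then show ?thesis using C' xX by auto
          next
            case False
            have chC: "\<forall>X\<in>C. \<forall>Y\<in>C. X \<subseteq> Y \<or> Y \<subseteq> X" using ch by (simp add: subset_chain_def)
            have sc: "subset.chain A C'" unfolding subset_chain_def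
            proof (intro conjI)
              show "C' \<subseteq> A" using C'(2) CA by (rule subset_trans)
              show "\<forall>X\<in>C'. \<forall>Y\<in>C'. X \<subseteq> Y \<or> Y \<subseteq> X" using chC C'(2) by (meson in_mono)
            qed
            have "\<Union>C' \<in> C'" by (rule Union_in_chain[OF C'(1) False sc])
            then have "\<Union>C' \<in> A" using C'(2) CA by (meson in_mono)
            then obtain z where z: "z \<in> S0" "\<Union>C' = - R z" unfolding A_def by blast
            have "\<Inter> f' = - \<Union>C'" using C'(3) by auto
            then have "\<Inter> f' = R z" using z(2) by simp
            moreover have "f z \<in> R z" using z(1) S0m Rf by blast
            ultimately show ?thesis using RX by blast
          qed
        qed
      qed
      then obtain w where w: "w \<in> X" "\<And>Y. Y \<in> C \<Longrightarrow> w \<notin> Y" by blast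
      have wR: "w \<in> R z" if "- R z \<in> C" for z using w(2)[OF that] by simp
      obtain Y0 where "Y0 \<in> C" using False by blast
      then obtain z0 where z0: "z0 \<in> S0" "Y0 = - R z0" using CA unfolding A_def by blast
      have "w \<in> S0" using S0tr[OF z0(1) wR] \<open>Y0 \<in> C\<close> z0(2) by simp
      moreover have "Y \<subseteq> - R w" if hY: "Y \<in> C" for Y
      proof -
        have "Y \<in> A" using CA hY by (meson in_mono)
        then obtain z where z: "Y = - R z" unfolding A_def by blast
        then have "w \<in> R z" using wR hY by simp
        then show ?thesis using Rtr z by blast
      qed
      ultimately show ?thesis unfolding A_def by blast
    qed
  qed
  then obtain M where M: "M \<in> A" "\<forall>Y\<in>A. M \<subseteq> Y \<longrightarrow> Y = M" by (elim bexE) (rule that)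
  from M(1) obtain z where z: "z \<in> S0" and Mz: "M = - R z" unfolding A_def by (rule imageE)
  have mx: "Y = - R z" if "Y \<in> A" "- R z \<subseteq> Y" for Y using M(2) that Mz by simp
  have zX: "z \<in> X" using z S0m by blast
  have fzR: "f z \<in> R z" using Rf[OF zX] .
  have fzS: "f z \<in> S0" using S0tr[OF z fzR] .
  have sub: "- R z \<subseteq> - R (f z)" using Rtr[OF fzR] by (rule compl_mono)
  have mem: "- R (f z) \<in> A" using fzS unfolding A_def by (rule imageI)
  have "- R (f z) = - R z" by (rule mx[OF mem sub])
  then have "R (f z) = R z" by simp
  then have "f z \<in> R (f z)" using fzR by simp
  then have c1: "chain_rel X f (f z) (f z)" by (simp add: Rm)
  have c2: "f z \<in> X" using fzS S0m by blast
  have "\<forall>k. f z \<in> R (x k)" using fzS S0m by blast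
  then have c3: "\<forall>k. chain_rel X f (x k) (f z)" by (simp add: Rm)
  have "f z \<in> chain_recurrent_set X f" unfolding chain_recurrent_set_def using c1 c2 by simp
  then show ?thesis using c3 by (intro bexI[of _ "f z"])
qed

end
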